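(* Every maximal abelian subgroup of a Frattini-injective pro-$p$ group is isolated.
   Context: $p$ is a prime; subgroups are closed. A pro-$p$ group $G$ is Frattini-injective if distinct finitely generated subgroups of $G$ have distinct Frattini subgroups. A subgroup $H$ of $G$ is isolated if for every $x\in G$, $x^p\in H$ implies $x\in H$. *)

theory Defs
  imports "HOL-Analysis.Analysis" "HOL-Algebra.Algebra"
begin

definition topological_group :: "('a, 'b) monoid_scheme \<Rightarrow> 'a topology \<Rightarrow> bool" where
  "topological_group G T \<longleftrightarrow> group G \<and> topspace T = carrier G \<and>
     continuous_map (prod_topology T T) T (\<lambda>(x, y). x \<otimes>\<^bsub>G\<^esub> y) \<and>
     continuous_map T T (\<lambda>x. inv\<^bsub>G\<^esub> x)"

definition pro_p_group :: "nat \<Rightarrow> ('a, 'b) monoid_scheme \<Rightarrow> 'a topology \<Rightarrow> bool" where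
  "pro_p_group p G T \<longleftrightarrow> Factorial_Ring.prime p \<and> topological_group G T \<and> compact_space T \<and> Hausdorff_space T \<and>
     (\<forall>U. openin T U \<and> \<one>\<^bsub>G\<^esub> \<in> U \<longrightarrow>
        (\<exists>N. N \<lhd> G \<and> openin T N \<and> N \<subseteq> U \<and> finite (rcosets\<^bsub>G\<^esub> N) \<and>
             (\<exists>k. card (rcosets\<^bsub>G\<^esub> N) = p ^ k)))"

definition closed_subgroup :: "('a, 'b) monoid_scheme \<Rightarrow> 'a topology \<Rightarrow> 'a set \<Rightarrow> bool" where
  "closed_subgroup G T H \<longleftrightarrow> subgroup H G \<and> closedin T H"

definition closed_generate :: "('a, 'b) monoid_scheme \<Rightarrow> 'a topology \<Rightarrow> 'a set \<Rightarrow> 'a set" where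
  "closed_generate G T S = carrier G \<inter> \<Inter>{H. closed_subgroup G T H \<and> S \<subseteq> H}"

definition fg_closed_subgroup :: "('a, 'b) monoid_scheme \<Rightarrow> 'a topology \<Rightarrow> 'a set \<Rightarrow> bool" where
  "fg_closed_subgroup G T H \<longleftrightarrow> closed_subgroup G T H \<and>
     (\<exists>S. finite S \<and> S \<subseteq> H \<and> H = closed_generate G T S)"

definition open_subgroup_of :: "('a, 'b) monoid_scheme \<Rightarrow> 'a topology \<Rightarrow> 'a set \<Rightarrow> 'a set \<Rightarrow> bool" where
  "open_subgroup_of G T H M \<longleftrightarrow> subgroup M G \<and> M \<subseteq> H \<and> openin (subtopology T H) M"

definition maximal_open_subgroup_of :: "('a, 'b) monoid_scheme \<Rightarrow> 'a topology \<Rightarrow> 'a set \<Rightarrow> 'a set \<Rightarrow> bool" where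
  "maximal_open_subgroup_of G T H M \<longleftrightarrow> open_subgroup_of G T H M \<and> M \<noteq> H \<and>
     (\<forall>M'. open_subgroup_of G T H M' \<and> M \<subseteq> M' \<longrightarrow> M' = M \<or> M' = H)"

text \<open>Frattini subgroup of H: intersection of the maximal open subgroups of H
 (equal to H if there are none).\<close>
definition frattini :: "('a, 'b) monoid_scheme \<Rightarrow> 'a topology \<Rightarrow> 'a set \<Rightarrow> 'a set" where
  "frattini G T H = H \<inter> \<Inter>{M. maximal_open_subgroup_of G T H M}"

definition frattini_injective :: "('a, 'b) monoid_scheme \<Rightarrow> 'a topology \<Rightarrow> bool" where
  "frattini_injective G T \<longleftrightarrow>
     (\<forall>H K. fg_closed_subgroup G T H \<and> fg_closed_subgroup G T K \<and> H \<noteq> K \<longrightarrow>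
        frattini G T H \<noteq> frattini G T K)"

definition abelian_subset :: "('a, 'b) monoid_scheme \<Rightarrow> 'a set \<Rightarrow> bool" where
  "abelian_subset G A \<longleftrightarrow> (\<forall>x\<in>A. \<forall>y\<in>A. x \<otimes>\<^bsub>G\<^esub> y = y \<otimes>\<^bsub>G\<^esub> x)"

definition maximal_abelian_subgroup :: "('a, 'b) monoid_scheme \<Rightarrow> 'a topology \<Rightarrow> 'a set \<Rightarrow> bool" where
  "maximal_abelian_subgroup G T A \<longleftrightarrow> closed_subgroup G T A \<and> abelian_subset G A \<and>
     (\<forall>B. closed_subgroup G T B \<and> abelian_subset G B \<and> A \<subseteq> B \<longrightarrow> B = A)"

definition isolated :: "nat \<Rightarrow> ('a, 'b) monoid_scheme \<Rightarrow> 'a set \<Rightarrow> bool" where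
  "isolated p G H \<longleftrightarrow> (\<forall>x\<in>carrier G. x [^]\<^bsub>G\<^esub> p \<in> H \<longrightarrow> x \<in> H)"

end

theory Submission
  imports Defs
begin

locale tgrp = group G for G (structure) and T +
  assumes tsp: "topspace T = carrier G"
    and cmul: "continuous_map (prod_topology T T) T (\<lambda>(x, y). x \<otimes> y)"
    and haus: "Hausdorff_space T"
begin

lemma lmul_cont:
  assumes "c \<in> carrier G" shows "continuous_map T T (\<lambda>g. c \<otimes> g)"
proof -
  have "continuous_map T (prod_topology T T) (\<lambda>g. (c, g))"
    by (intro continuous_map_pairedI) (auto simp: tsp assms)
  from continuous_map_compose[OF this cmul] show ?thesis by (simp add: o_def)
qed

lemma rmul_cont:
  assumes "c \<in> carrier G" shows "continuous_map T T (\<lambda>g. g \<otimes> c)"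
proof -
  have "continuous_map T (prod_topology T T) (\<lambda>g. (g, c))"
    by (intro continuous_map_pairedI) (auto simp: tsp assms)
  from continuous_map_compose[OF this cmul] show ?thesis by (simp add: o_def)
qed

lemma closed_lcoset:
  assumes c: "c \<in> carrier G" and P: "closedin T P"
  shows "closedin T {c \<otimes> q | q. q \<in> P}"
proof -
  have PG: "P \<subseteq> carrier G" using closedin_subset P tsp by auto
  have "{c \<otimes> q | q. q \<in> P} = {g \<in> topspace T. inv c \<otimes> g \<in> P}"
  proof (intro Set.set_eqI iffI)
    fix g assume "g \<in> {c \<otimes> q | q. q \<in> P}"
    then obtain q where "q \<in> P" "g = c \<otimes> q" by auto
    then show "g \<in> {g \<in> topspace T. inv c \<otimes> g \<in> P}"
      using PG c by (auto simp: tsp m_assoc[symmetric])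
  next
    fix g assume "g \<in> {g \<in> topspace T. inv c \<otimes> g \<in> P}"
    then have "g \<in> carrier G" "inv c \<otimes> g \<in> P" by (auto simp: tsp)
    moreover have "g = c \<otimes> (inv c \<otimes> g)" using c \<open>g \<in> carrier G\<close> by (simp add: m_assoc[symmetric])
    ultimately show "g \<in> {c \<otimes> q | q. q \<in> P}" by blast
  qed
  also have "closedin T \<dots>"
    by (rule closedin_continuous_map_preimage[OF lmul_cont P]) (use c in auto)
  finally show ?thesis .
qed

definition Cz :: "'a \<Rightarrow> 'a set" where
  "Cz a = {g \<in> carrier G. g \<otimes> a = a \<otimes> g}"

lemma Cz_closed:
  assumes a: "a \<in> carrier G" shows "closedin T (Cz a)"
proof -
  have "continuous_map T (prod_topology T T) (\<lambda>g. (g \<otimes> a, a \<otimes> g))"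
    by (intro continuous_map_pairedI rmul_cont lmul_cont a)
  from closedin_continuous_map_preimage[OF this haus[unfolded Hausdorff_space_closedin_diagonal]]
  have "closedin T {g \<in> topspace T. (g \<otimes> a, a \<otimes> g) \<in> (\<lambda>x. (x, x)) ` topspace T}" .
  moreover have "{g \<in> topspace T. (g \<otimes> a, a \<otimes> g) \<in> (\<lambda>x. (x, x)) ` topspace T} = Cz a"
    by (auto simp: Cz_def tsp a)
  ultimately show ?thesis by simp
qed

lemma Cz_subgroup:
  assumes a: "a \<in> carrier G" shows "subgroup (Cz a) G"
proof
  show "Cz a \<subseteq> carrier G" by (auto simp: Cz_def)
  show "\<one> \<in> Cz a" using a by (auto simp: Cz_def)
  fix x y assume "x \<in> Cz a" "y \<in> Cz a"
  then show "x \<otimes> y \<in> Cz a" using a by (auto simp: Cz_def m_assoc) (metis m_assoc)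
next
  fix x assume x: "x \<in> Cz a"
  then have xc: "x \<in> carrier G" and e: "x \<otimes> a = a \<otimes> x" by (auto simp: Cz_def)
  have "inv x \<otimes> a = inv x \<otimes> (a \<otimes> x) \<otimes> inv x" using xc a by (simp add: m_assoc)
  also have "\<dots> = inv x \<otimes> (x \<otimes> a) \<otimes> inv x" by (simp add: e)
  also have "\<dots> = a \<otimes> inv x" using xc a by (simp add: m_assoc[symmetric])
  finally show "inv x \<in> Cz a" using xc by (simp add: Cz_def)
qed

lemma Cz_cs: "a \<in> carrier G \<Longrightarrow> closed_subgroup G T (Cz a)"
  by (simp add: closed_subgroup_def Cz_closed Cz_subgroup)


abbreviation cg where "cg S \<equiv> closed_generate G T S"

lemma cs_carrier: "closed_subgroup G T (carrier G)"
  using closedin_topspace[of T] by (simp add: closed_subgroup_def tsp subgroup_self)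

lemma cs_sub: "closed_subgroup G T H \<Longrightarrow> H \<subseteq> carrier G"
  by (simp add: closed_subgroup_def subgroup.subset)

lemma cg_cs: "closed_subgroup G T (cg S)"
proof -
  define F where "F = {H. closed_subgroup G T H \<and> S \<subseteq> H}"
  show ?thesis
  proof (cases "F = {}")
    case True
    then show ?thesis by (simp add: closed_generate_def F_def[symmetric] cs_carrier)
  next
    case False
    have e: "cg S = \<Inter>F" using False cs_sub by (auto simp: closed_generate_def F_def)
    have "subgroup (\<Inter>F) G" using False by (intro subgroups_Inter) (auto simp: F_def closed_subgroup_def)
    moreover have "closedin T (\<Inter>F)" using False by (intro closedin_Inter) (auto simp: F_def closed_subgroup_def)
    ultimately show ?thesis by (simp add: e closed_subgroup_def)
  qed
qed

lemma cg_min: "closed_subgroup G T H \<Longrightarrow> S \<subseteq> H \<Longrightarrow> cg S \<subseteq> H"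
  by (auto simp: closed_generate_def)

lemma cg_sup: "S \<subseteq> carrier G \<Longrightarrow> S \<subseteq> cg S"
  by (auto simp: closed_generate_def)

lemma cs_one: "closed_subgroup G T {\<one>}"
  using closedin_t1_singleton[OF Hausdorff_imp_t1_space[OF haus], of \<one>]
  by (simp add: closed_subgroup_def tsp triv_subgroup)

lemma cg_empty: "cg {} = {\<one>}"
proof -
  have "cg {} \<subseteq> {\<one>}" by (rule cg_min[OF cs_one]) auto
  moreover have "\<one> \<in> cg {}" using cg_cs by (simp add: closed_subgroup_def subgroup.one_closed)
  ultimately show ?thesis by auto
qed

lemma fg_cg: "finite S \<Longrightarrow> S \<subseteq> carrier G \<Longrightarrow> fg_closed_subgroup G T (cg S)"
  unfolding fg_closed_subgroup_def using cg_cs cg_sup by blast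

lemma fr_sub_max: "maximal_open_subgroup_of G T H M \<Longrightarrow> frattini G T H \<subseteq> M"
  by (auto simp: frattini_def)

lemma fr_sub: "frattini G T H \<subseteq> H"
  by (auto simp: frattini_def)

lemma fr_one: "frattini G T {\<one>} = {\<one>}"
proof -
  have "\<not> maximal_open_subgroup_of G T {\<one>} M" for M
  proof
    assume "maximal_open_subgroup_of G T {\<one>} M"
    then have "subgroup M G" "M \<subseteq> {\<one>}" "M \<noteq> {\<one>}"
      by (auto simp: maximal_open_subgroup_of_def open_subgroup_of_def)
    then show False using subgroup.one_closed by blast
  qed
  then show ?thesis by (auto simp: frattini_def)
qed

lemma one_in_fr: "subgroup H G \<Longrightarrow> \<one> \<in> frattini G T H"
  by (auto simp: frattini_def maximal_open_subgroup_of_def open_subgroup_of_def subgroup.one_closed)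

lemma Bez:
  assumes K: "subgroup K G" and x: "x \<in> carrier G" and pr: "Factorial_Ring.prime (p::nat)"
    and xi: "x [^] (i::int) \<in> K" and xp: "x [^] p \<in> K" and nd: "\<not> int p dvd i"
  shows "x \<in> K"
proof -
  have "coprime (int p) i" using pr nd
    by (simp add: prime_imp_coprime)
  then have "gcd i (int p) = 1" by (simp add: coprime_iff_gcd_eq_1 gcd.commute)
  then obtain u v where uv: "u * i + v * int p = 1" using bezout_int[of i "int p"] by auto
  have "x = x [^] (u * i + v * int p)" using uv x by simp
  also have "\<dots> = (x [^] i) [^] u \<otimes> (x [^] int p) [^] v"
    using x by (simp add: int_pow_mult int_pow_pow mult.commute)
  also have "\<dots> \<in> K"
  proof (rule subgroup.m_closed[OF K])
    show "(x [^] i) [^] u \<in> K" by (rule subgroup_int_pow_closed[OF K xi])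
    show "(x [^] int p) [^] v \<in> K" using subgroup_int_pow_closed[OF K xp] by (simp add: int_pow_int)
  qed
  finally show ?thesis .
qed


lemma L1:
  assumes x: "x \<in> carrier G" and pr: "Factorial_Ring.prime (p::nat)"
  shows "frattini G T (cg {x}) \<subseteq> cg {x [^] p}"
proof -
  define Xs where "Xs = cg {x}"
  define P where "P = cg {x [^] p}"
  have Xcs: "closed_subgroup G T Xs" and Pcs: "closed_subgroup G T P"
    by (simp_all add: Xs_def P_def cg_cs)
  have Xsub: "subgroup Xs G" and Psub: "subgroup P G"
    using Xcs Pcs by (simp_all add: closed_subgroup_def)
  have xX: "x \<in> Xs" using cg_sup[of "{x}"] x by (simp add: Xs_def)
  have xpX: "x [^] p \<in> Xs" using subgroup_int_pow_closed[OF Xsub xX, of "int p"] by (simp add: int_pow_int)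
  have xpP: "x [^] p \<in> P" using cg_sup[of "{x [^] p}"] x by (simp add: P_def)
  have PX: "P \<subseteq> Xs" unfolding P_def using cg_min[OF Xcs] xpX by simp
  have "x [^] p \<in> Cz x" using x by (simp add: Cz_def nat_pow_Suc2[symmetric])
  then have PC: "P \<subseteq> Cz x" unfolding P_def using cg_min[OF Cz_cs[OF x]] by simp
  have PG: "P \<subseteq> carrier G" using Psub subgroup.subset by blast
  show ?thesis
  proof (cases "x \<in> P")
    case True
    then have "Xs \<subseteq> P" unfolding Xs_def using cg_min[OF Pcs] by simp
    then show ?thesis using fr_sub[of "cg {x}"] by (simp add: Xs_def P_def)
  next
    case False
    have comm: "x [^] (j::int) \<otimes> q = q \<otimes> x [^] j" if q: "q \<in> P" for j q
    proof -
      have qc: "q \<in> carrier G" using q PG by auto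
      have "x \<in> Cz q" using q PC x by (auto simp: Cz_def)
      then have "x [^] j \<in> Cz q" by (rule subgroup_int_pow_closed[OF Cz_subgroup[OF qc]])
      then show ?thesis by (simp add: Cz_def)
    qed
    have powP: "x [^] k \<in> P" if d: "int p dvd k" for k :: int
    proof -
      obtain m where "k = int p * m" using d by (auto elim: dvdE)
      then have "x [^] k = (x [^] int p) [^] m" using x by (simp add: int_pow_pow)
      then show ?thesis using subgroup_int_pow_closed[OF Psub xpP, of m] by (simp add: int_pow_int)
    qed
    define Qi where "Qi i = {x [^] (i::nat) \<otimes> q | q. q \<in> P}" for i
    have Qi_closed: "closedin T (Qi i)" for i
      unfolding Qi_def using Pcs x by (intro closed_lcoset) (auto simp: closed_subgroup_def)
    define R where "R = {x [^] (k::int) \<otimes> q | k q. q \<in> P}"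
    have dec: "\<exists>i<p. \<exists>q'\<in>P. x [^] k \<otimes> q = x [^] i \<otimes> q'" if q: "q \<in> P" for k :: int and q
    proof -
      have pp: "p > 0" using pr prime_gt_0_nat by blast
      define i where "i = nat (k mod int p)"
      have ii: "int i = k mod int p" using pp by (simp add: i_def)
      have ip: "i < p" using pp by (simp add: i_def nat_less_iff)
      have "k = int i + int p * (k div int p)" using ii by simp
      then have "x [^] k = x [^] (int i) \<otimes> x [^] (int p * (k div int p))"
        using x by (metis int_pow_mult)
      then have "x [^] k \<otimes> q = x [^] i \<otimes> (x [^] (int p * (k div int p)) \<otimes> q)"
        using x q PG by (simp add: int_pow_int m_assoc subsetD)
      moreover have "x [^] (int p * (k div int p)) \<otimes> q \<in> P"
        using powP q by (intro subgroup.m_closed[OF Psub]) auto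
      ultimately show ?thesis using ip by blast
    qed
    have Req: "R = \<Union> (Qi ` {..<p})"
    proof (intro Set.set_eqI iffI)
      fix g assume "g \<in> R"
      then obtain k q where "q \<in> P" "g = x [^] (k::int) \<otimes> q" by (auto simp: R_def)
      then show "g \<in> \<Union> (Qi ` {..<p})" using dec[of q k] by (auto simp: Qi_def)
    next
      fix g assume "g \<in> \<Union> (Qi ` {..<p})"
      then obtain i q where "q \<in> P" "g = x [^] (i::nat) \<otimes> q" by (auto simp: Qi_def)
      then have "g = x [^] (int i) \<otimes> q" by (simp add: int_pow_int)
      then show "g \<in> R" using \<open>q \<in> P\<close> by (auto simp: R_def)
    qed
    have Rclosed: "closedin T R" unfolding Req by (intro closedin_Union) (auto intro: Qi_closed)
    have Rsub: "subgroup R G"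
    proof
      show "R \<subseteq> carrier G" using PG x by (auto simp: R_def)
      have "\<one> = x [^] (0::int) \<otimes> \<one>" by simp
      then show "\<one> \<in> R" unfolding R_def using subgroup.one_closed[OF Psub] by blast
    next
      fix g h assume "g \<in> R" "h \<in> R"
      then obtain k q l q' where q: "q \<in> P" "g = x [^] (k::int) \<otimes> q" and q': "q' \<in> P" "h = x [^] (l::int) \<otimes> q'"
        by (auto simp: R_def)
      have qc: "q \<in> carrier G" "q' \<in> carrier G" using q q' PG by auto
      have "g \<otimes> h = x [^] k \<otimes> (q \<otimes> x [^] l) \<otimes> q'" using q q' qc x by (simp add: m_assoc)
      also have "\<dots> = x [^] k \<otimes> (x [^] l \<otimes> q) \<otimes> q'" using comm[OF q(1)] by simp
      also have "\<dots> = x [^] (k + l) \<otimes> (q \<otimes> q')" using qc x by (simp add: m_assoc int_pow_mult)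
      finally show "g \<otimes> h \<in> R" unfolding R_def using subgroup.m_closed[OF Psub q(1) q'(1)] by blast
    next
      fix g assume "g \<in> R"
      then obtain k q where q: "q \<in> P" "g = x [^] (k::int) \<otimes> q" by (auto simp: R_def)
      have qc: "q \<in> carrier G" using q PG by auto
      have iq: "inv q \<in> P" using q subgroup.m_inv_closed[OF Psub] by blast
      have "inv g = inv q \<otimes> x [^] (- k)" using q qc x by (simp add: inv_mult_group int_pow_neg)
      also have "\<dots> = x [^] (- k) \<otimes> inv q" using comm[OF iq] by simp
      finally show "inv g \<in> R" unfolding R_def using iq by blast
    qed
    have "x = x [^] (1::int) \<otimes> \<one>" using x by simp
    then have "x \<in> R" unfolding R_def using subgroup.one_closed[OF Psub] by blast
    then have XR: "Xs \<subseteq> R" unfolding Xs_def using Rsub Rclosed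
      by (intro cg_min) (auto simp: closed_subgroup_def)
    have XR2: "\<exists>i<p. \<exists>q\<in>P. g = x [^] (i::nat) \<otimes> q" if "g \<in> Xs" for g
      using XR that unfolding Req by (auto simp: Qi_def)
    have notin: "x [^] (i::nat) \<notin> P" if "0 < i" "i < p" for i
    proof
      assume "x [^] i \<in> P"
      then have "x [^] (int i) \<in> P" by (simp add: int_pow_int)
      moreover have "\<not> int p dvd int i" using that by (auto dest: dvd_imp_le)
      ultimately have "x \<in> P" using Bez[OF Psub x pr _ xpP] by blast
      then show False using False by simp
    qed
    define Q where "Q = \<Union> (Qi ` {1..<p})"
    have Qclosed: "closedin T Q" unfolding Q_def by (intro closedin_Union) (auto intro: Qi_closed)
    have Peq: "P = Xs \<inter> (topspace T - Q)"
    proof (intro Set.set_eqI iffI)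
      fix g assume g: "g \<in> P"
      have "g \<notin> Q"
      proof
        assume "g \<in> Q"
        then obtain i q where i: "1 \<le> i" "i < p" and q: "q \<in> P" "g = x [^] (i::nat) \<otimes> q"
          by (auto simp: Q_def Qi_def)
        have qc: "q \<in> carrier G" using q PG by auto
        have "x [^] i = g \<otimes> inv q" using q qc x by (simp add: m_assoc)
        also have "\<dots> \<in> P" using g q(1) Psub by (simp add: subgroup.m_closed subgroup.m_inv_closed)
        finally show False using notin i by simp
      qed
      then show "g \<in> Xs \<inter> (topspace T - Q)" using g PX PG by (auto simp: tsp)
    next
      fix g assume g: "g \<in> Xs \<inter> (topspace T - Q)"
      then obtain i q where i: "i < p" and q: "q \<in> P" "g = x [^] (i::nat) \<otimes> q" using XR2 by blast
      show "g \<in> P"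
      proof (cases "i = 0")
        case True
        then show ?thesis using q PG by auto
      next
        case False
        then have "g \<in> Q" using i q by (auto simp: Q_def Qi_def)
        then show ?thesis using g by simp
      qed
    qed
    have Popen: "openin (subtopology T Xs) P"
      unfolding Peq by (intro openin_subtopology_Int2 openin_diff openin_topspace Qclosed)
    have "maximal_open_subgroup_of G T Xs P"
      unfolding maximal_open_subgroup_of_def open_subgroup_of_def
    proof (intro conjI allI impI)
      show "subgroup P G" "P \<subseteq> Xs" "openin (subtopology T Xs) P" by (fact Psub PX Popen)+
      show "P \<noteq> Xs" using False xX by auto
      fix M' assume M': "(subgroup M' G \<and> M' \<subseteq> Xs \<and> openin (subtopology T Xs) M') \<and> P \<subseteq> M'"
      then have Msub: "subgroup M' G" and MX: "M' \<subseteq> Xs" and PM: "P \<subseteq> M'" by auto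
      show "M' = P \<or> M' = Xs"
      proof (cases "M' = P")
        case True then show ?thesis by simp
      next
        case False
        then obtain m where m: "m \<in> M'" "m \<notin> P" using PM by blast
        then obtain i q where i: "i < p" and q: "q \<in> P" "m = x [^] (i::nat) \<otimes> q" using XR2 MX by blast
        have qc: "q \<in> carrier G" using q PG by auto
        have "x [^] i = m \<otimes> inv q" using q qc x by (simp add: m_assoc)
        also have "\<dots> \<in> M'" using m q(1) PM Msub by (simp add: subset_iff subgroup.m_closed subgroup.m_inv_closed)
        finally have xiM: "x [^] (int i) \<in> M'" by (simp add: int_pow_int)
        have "i \<noteq> 0" using q m qc by (metis l_one nat_pow_0)
        then have "\<not> int p dvd int i" using i by (auto dest: dvd_imp_le)
        then have xM: "x \<in> M'" using Bez[OF Msub x pr xiM] xpP PM by blast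
        have "R \<subseteq> M'"
        proof
          fix g assume "g \<in> R"
          then obtain k q where q: "q \<in> P" "g = x [^] (k::int) \<otimes> q" by (auto simp: R_def)
          then show "g \<in> M'" using subgroup_int_pow_closed[OF Msub xM, of k] PM
            by (auto intro: subgroup.m_closed[OF Msub])
        qed
        then show ?thesis using XR MX by auto
      qed
    qed
    then show ?thesis using fr_sub_max by (simp add: Xs_def P_def)
  qed
qed


lemma TF:
  assumes FI: "frattini_injective G T" and pr: "Factorial_Ring.prime (p::nat)"
    and z: "z \<in> carrier G" and zp: "z [^] p = \<one>"
  shows "z = \<one>"
proof -
  have "cg {\<one>} \<subseteq> {\<one>}" by (rule cg_min[OF cs_one]) auto
  then have "frattini G T (cg {z}) \<subseteq> {\<one>}" using L1[OF z pr] zp by auto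
  moreover have "\<one> \<in> frattini G T (cg {z})"
    using cg_cs by (intro one_in_fr) (simp add: closed_subgroup_def)
  ultimately have "frattini G T (cg {z}) = frattini G T (cg {})" by (auto simp: cg_empty fr_one)
  moreover have "fg_closed_subgroup G T (cg {z})" "fg_closed_subgroup G T (cg {})"
    using z by (auto intro: fg_cg)
  ultimately have "cg {z} = cg {}" using FI unfolding frattini_injective_def by blast
  moreover have "z \<in> cg {z}" using cg_sup[of "{z}"] z by simp
  ultimately show ?thesis by (simp add: cg_empty)
qed

definition cj :: "'a \<Rightarrow> 'a \<Rightarrow> 'a" where "cj a g = inv a \<otimes> g \<otimes> a"

lemma lcanc1: "a \<in> carrier G \<Longrightarrow> h \<in> carrier G \<Longrightarrow> a \<otimes> (inv a \<otimes> h) = h"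
  by (simp add: m_assoc[symmetric])
lemma lcanc2: "a \<in> carrier G \<Longrightarrow> h \<in> carrier G \<Longrightarrow> inv a \<otimes> (a \<otimes> h) = h"
  by (simp add: m_assoc[symmetric])

lemma cj_closed: "a \<in> carrier G \<Longrightarrow> g \<in> carrier G \<Longrightarrow> cj a g \<in> carrier G"
  by (simp add: cj_def)

lemma cj_cj: "a \<in> carrier G \<Longrightarrow> g \<in> carrier G \<Longrightarrow> cj (inv a) (cj a g) = g"
  by (simp add: cj_def m_assoc lcanc1)

lemma cj_cj2: "a \<in> carrier G \<Longrightarrow> g \<in> carrier G \<Longrightarrow> cj a (cj (inv a) g) = g"
  by (simp add: cj_def m_assoc lcanc2)

lemma cj_mult: "a \<in> carrier G \<Longrightarrow> g \<in> carrier G \<Longrightarrow> h \<in> carrier G \<Longrightarrow> cj a (g \<otimes> h) = cj a g \<otimes> cj a h"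
  by (simp add: cj_def m_assoc lcanc1)

lemma cj_one: "a \<in> carrier G \<Longrightarrow> cj a \<one> = \<one>"
  by (simp add: cj_def)

lemma cj_inv: "a \<in> carrier G \<Longrightarrow> g \<in> carrier G \<Longrightarrow> cj a (inv g) = inv (cj a g)"
  by (simp add: cj_def inv_mult_group m_assoc)

lemma cj_pow: "a \<in> carrier G \<Longrightarrow> g \<in> carrier G \<Longrightarrow> cj a (g [^] (n::nat)) = (cj a g) [^] n"
  by (induction n) (simp_all add: cj_one cj_mult)

lemma cj_inj: "a \<in> carrier G \<Longrightarrow> inj_on (cj a) (carrier G)"
  by (metis cj_cj inj_onI)

lemma cj_img_img: "a \<in> carrier G \<Longrightarrow> U \<subseteq> carrier G \<Longrightarrow> cj (inv a) ` cj a ` U = U"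
  by (force simp: image_image cj_cj)

lemma cj_img_sub: "a \<in> carrier G \<Longrightarrow> U \<subseteq> carrier G \<Longrightarrow> cj a ` U \<subseteq> carrier G"
  by (auto simp: cj_closed)

lemma cj_cont: "a \<in> carrier G \<Longrightarrow> continuous_map T T (cj a)"
proof -
  assume a: "a \<in> carrier G"
  have "cj a = (\<lambda>g. g \<otimes> a) \<circ> (\<lambda>g. inv a \<otimes> g)" by (auto simp: cj_def)
  then show ?thesis using continuous_map_compose[OF lmul_cont rmul_cont] a by simp
qed

lemma cj_img_eq: "a \<in> carrier G \<Longrightarrow> U \<subseteq> carrier G \<Longrightarrow> cj a ` U = {g \<in> topspace T. cj (inv a) g \<in> U}"
  by (auto simp: tsp cj_cj cj_closed) (metis cj_cj2 image_eqI)

lemma cj_img_closed: "a \<in> carrier G \<Longrightarrow> closedin T U \<Longrightarrow> closedin T (cj a ` U)"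
  using cj_img_eq[of a U] closedin_continuous_map_preimage[OF cj_cont[of "inv a"], of U]
  by (simp add: closedin_subset tsp) (metis closedin_subset tsp)

lemma cj_img_open: "a \<in> carrier G \<Longrightarrow> openin T U \<Longrightarrow> openin T (cj a ` U)"
  using cj_img_eq[of a U] openin_continuous_map_preimage[OF cj_cont[of "inv a"], of U]
  by (simp add: openin_subset tsp) (metis openin_subset tsp)

lemma cj_img_subgroup: assumes a: "a \<in> carrier G" and H: "subgroup H G" shows "subgroup (cj a ` H) G"
proof
  have HG: "H \<subseteq> carrier G" using H subgroup.subset by blast
  show "cj a ` H \<subseteq> carrier G" using cj_img_sub[OF a HG] .
  show "\<one> \<in> cj a ` H" using a subgroup.one_closed[OF H] cj_one[OF a] by force
  fix g h assume "g \<in> cj a ` H" "h \<in> cj a ` H"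
  then obtain g' h' where "g' \<in> H" "h' \<in> H" "g = cj a g'" "h = cj a h'" by auto
  then show "g \<otimes> h \<in> cj a ` H" using HG a cj_mult[of a g' h'] subgroup.m_closed[OF H] by force
next
  have HG: "H \<subseteq> carrier G" using H subgroup.subset by blast
  fix g assume "g \<in> cj a ` H"
  then obtain g' where "g' \<in> H" "g = cj a g'" by auto
  then show "inv g \<in> cj a ` H" using HG a cj_inv[of a g'] subgroup.m_inv_closed[OF H] by force
qed

lemma cj_img_cs: "a \<in> carrier G \<Longrightarrow> closed_subgroup G T H \<Longrightarrow> closed_subgroup G T (cj a ` H)"
  by (simp add: closed_subgroup_def cj_img_subgroup cj_img_closed)

lemma cj_img_Int: "a \<in> carrier G \<Longrightarrow> U \<subseteq> carrier G \<Longrightarrow> H \<subseteq> carrier G \<Longrightarrow> cj a ` (U \<inter> H) = cj a ` U \<inter> cj a ` H"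
  using cj_inj[of a] by (simp add: inj_on_image_Int)

lemma cj_osg: assumes a: "a \<in> carrier G" and HG: "H \<subseteq> carrier G" and M: "open_subgroup_of G T H M"
  shows "open_subgroup_of G T (cj a ` H) (cj a ` M)"
proof -
  have "subgroup M G" "M \<subseteq> H" and o: "openin (subtopology T H) M" using M by (auto simp: open_subgroup_of_def)
  from o obtain U where U: "openin T U" "M = U \<inter> H" by (auto simp: openin_subtopology)
  have UG: "U \<subseteq> carrier G" using openin_subset[OF U(1)] tsp by simp
  have "cj a ` M = cj a ` U \<inter> cj a ` H" using U(2) cj_img_Int[OF a UG HG] by simp
  then have "openin (subtopology T (cj a ` H)) (cj a ` M)"
    using cj_img_open[OF a U(1)] by (auto simp: openin_subtopology)
  then show ?thesis using \<open>subgroup M G\<close> \<open>M \<subseteq> H\<close> a by (auto simp: open_subgroup_of_def cj_img_subgroup)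
qed

lemma cj_mos: assumes a: "a \<in> carrier G" and HG: "H \<subseteq> carrier G" and M: "maximal_open_subgroup_of G T H M"
  shows "maximal_open_subgroup_of G T (cj a ` H) (cj a ` M)"
  unfolding maximal_open_subgroup_of_def
proof (intro conjI allI impI)
  have Mo: "open_subgroup_of G T H M" using M by (simp add: maximal_open_subgroup_of_def)
  then have MH: "M \<subseteq> H" by (simp add: open_subgroup_of_def)
  show "open_subgroup_of G T (cj a ` H) (cj a ` M)" using cj_osg[OF a HG Mo] .
  show "cj a ` M \<noteq> cj a ` H"
    using M MH HG cj_inj[OF a] by (auto simp: maximal_open_subgroup_of_def inj_on_image_eq_iff)
  fix M'' assume M'': "open_subgroup_of G T (cj a ` H) M'' \<and> cj a ` M \<subseteq> M''"
  have ia: "inv a \<in> carrier G" using a by simp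
  have cHG: "cj a ` H \<subseteq> carrier G" using cj_img_sub[OF a HG] .
  have M''G: "M'' \<subseteq> carrier G" using M'' cHG by (auto simp: open_subgroup_of_def)
  have "open_subgroup_of G T (cj (inv a) ` cj a ` H) (cj (inv a) ` M'')"
    using cj_osg[OF ia cHG] M'' by blast
  then have o2: "open_subgroup_of G T H (cj (inv a) ` M'')" using cj_img_img[OF a HG] by simp
  have "M \<subseteq> cj (inv a) ` M''" using M'' cj_img_img[OF a] MH HG
    by (metis image_mono order_trans)
  then have "cj (inv a) ` M'' = M \<or> cj (inv a) ` M'' = H" using M o2 by (auto simp: maximal_open_subgroup_of_def)
  moreover have "cj a ` cj (inv a) ` M'' = M''" using M''G a by (force simp: image_image cj_cj2)
  ultimately show "M'' = cj a ` M \<or> M'' = cj a ` H" by auto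
qed

lemma cj_fr: assumes a: "a \<in> carrier G" and HG: "H \<subseteq> carrier G"
  shows "frattini G T (cj a ` H) = cj a ` frattini G T H"
proof -
  have ia: "inv a \<in> carrier G" using a by simp
  have cHG: "cj a ` H \<subseteq> carrier G" using cj_img_sub[OF a HG] .
  have bk: "\<exists>M0. maximal_open_subgroup_of G T H M0 \<and> M'' = cj a ` M0"
    if M'': "maximal_open_subgroup_of G T (cj a ` H) M''" for M''
  proof -
    have "M'' \<subseteq> cj a ` H" using M''
      by (simp add: maximal_open_subgroup_of_def open_subgroup_of_def)
    then have M''G: "M'' \<subseteq> carrier G" using cHG by blast
    have "maximal_open_subgroup_of G T H (cj (inv a) ` M'')"
      using cj_mos[OF ia cHG M''] cj_img_img[OF a HG] by simp
    moreover have "cj a ` cj (inv a) ` M'' = M''" using M''G a by (force simp: image_image cj_cj2)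
    ultimately show ?thesis by metis
  qed
  show ?thesis
  proof (intro Set.set_eqI iffI)
    fix g assume g: "g \<in> cj a ` frattini G T H"
    then obtain h where h: "h \<in> frattini G T H" "g = cj a h" by auto
    show "g \<in> frattini G T (cj a ` H)"
      unfolding frattini_def
    proof (intro IntI InterI)
      show "g \<in> cj a ` H" using h by (auto simp: frattini_def)
      fix M'' assume "M'' \<in> {M. maximal_open_subgroup_of G T (cj a ` H) M}"
      then obtain M0 where "maximal_open_subgroup_of G T H M0" "M'' = cj a ` M0" using bk by blast
      then show "g \<in> M''" using h by (auto simp: frattini_def)
    qed
  next
    fix g assume g: "g \<in> frattini G T (cj a ` H)"
    then obtain h where h: "h \<in> H" "g = cj a h" by (auto simp: frattini_def)
    have "h \<in> M" if M: "maximal_open_subgroup_of G T H M" for M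
    proof -
      have "g \<in> cj a ` M" using cj_mos[OF a HG M] g by (auto simp: frattini_def)
      then obtain h' where "h' \<in> M" "g = cj a h'" by auto
      moreover have "M \<subseteq> H" using M by (auto simp: maximal_open_subgroup_of_def open_subgroup_of_def)
      ultimately show ?thesis using h HG cj_inj[OF a] by (metis inj_onD subsetD)
    qed
    then show "g \<in> cj a ` frattini G T H" using h by (auto simp: frattini_def)
  qed
qed

lemma cj_cg: assumes a: "a \<in> carrier G" and S: "S \<subseteq> carrier G"
  shows "cj a ` cg S = cg (cj a ` S)"
proof
  have ia: "inv a \<in> carrier G" using a by simp
  have cgG: "cg S \<subseteq> carrier G" using cg_cs cs_sub by blast
  have cgG2: "cg (cj a ` S) \<subseteq> carrier G" using cg_cs cs_sub by blast
  show "cg (cj a ` S) \<subseteq> cj a ` cg S"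
    using cg_min[OF cj_img_cs[OF a cg_cs]] cg_sup[OF S] by (simp add: image_mono)
  have "cj (inv a) ` cj a ` S \<subseteq> cj (inv a) ` cg (cj a ` S)"
    using cg_sup[OF cj_img_sub[OF a S]] by (simp add: image_mono)
  then have "cg S \<subseteq> cj (inv a) ` cg (cj a ` S)"
    using cg_min[OF cj_img_cs[OF ia cg_cs]] cj_img_img[OF a S] by simp
  then have "cj a ` cg S \<subseteq> cj a ` cj (inv a) ` cg (cj a ` S)" by (rule image_mono)
  also have "\<dots> = cg (cj a ` S)" using cgG2 a by (force simp: image_image cj_cj2)
  finally show "cj a ` cg S \<subseteq> cg (cj a ` S)" .
qed


lemma Cz_sym: "s \<in> carrier G \<Longrightarrow> b \<in> carrier G \<Longrightarrow> b \<in> Cz s \<longleftrightarrow> s \<in> Cz b"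
  by (auto simp: Cz_def)

lemma comm_root:
  assumes FI: "frattini_injective G T" and pr: "Factorial_Ring.prime (p::nat)"
    and x: "x \<in> carrier G" and a: "a \<in> carrier G"
    and c: "x [^] p \<otimes> a = a \<otimes> x [^] p"
  shows "x \<otimes> a = a \<otimes> x"
proof -
  define Xs where "Xs = cg {x}"
  define y where "y = cj a x"
  have y: "y \<in> carrier G" using x a by (simp add: y_def cj_closed)
  have XsG: "Xs \<subseteq> carrier G" unfolding Xs_def using cg_cs cs_sub by blast
  have "x [^] p \<in> Cz a" using c x by (simp add: Cz_def)
  then have "cg {x [^] p} \<subseteq> Cz a" using cg_min[OF Cz_cs[OF a]] by simp
  then have FC: "frattini G T Xs \<subseteq> Cz a" using L1[OF x pr] by (simp add: Xs_def)
  have fix1: "cj a h = h" if "h \<in> Cz a" for h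
    using that a by (simp add: Cz_def cj_def m_assoc[symmetric]) (simp add: m_assoc lcanc2)
  have "cj a ` frattini G T Xs = frattini G T Xs"
    using fix1 FC by (force simp: image_iff)
  then have "frattini G T (cj a ` Xs) = frattini G T Xs" using cj_fr[OF a XsG] by simp
  moreover have eqY: "cj a ` Xs = cg {y}" using cj_cg[OF a, of "{x}"] x by (simp add: Xs_def y_def)
  ultimately have "frattini G T (cg {y}) = frattini G T Xs" by simp
  moreover have "fg_closed_subgroup G T (cg {y})" "fg_closed_subgroup G T Xs"
    using x y by (auto intro: fg_cg simp: Xs_def)
  ultimately have "cg {y} = Xs" using FI unfolding frattini_injective_def by blast
  then have "y \<in> Xs" using cg_sup[of "{y}"] y by simp
  moreover have "Xs \<subseteq> Cz x" unfolding Xs_def using cg_min[OF Cz_cs[OF x]] x by (simp add: Cz_def)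
  ultimately have yx: "y \<otimes> x = x \<otimes> y" by (auto simp: Cz_def)
  have ixy: "inv x \<otimes> y = y \<otimes> inv x"
  proof -
    have "x \<in> Cz y" using yx x y by (simp add: Cz_def)
    then have "inv x \<in> Cz y" using subgroup.m_inv_closed[OF Cz_subgroup[OF y]] by blast
    then show ?thesis by (simp add: Cz_def)
  qed
  have yp: "y [^] p = x [^] p"
  proof -
    have "y [^] p = cj a (x [^] p)" using cj_pow[OF a x] by (simp add: y_def)
    also have "\<dots> = x [^] p" using fix1 \<open>x [^] p \<in> Cz a\<close> by simp
    finally show ?thesis .
  qed
  have "(inv x \<otimes> y) [^] p = inv x [^] p \<otimes> y [^] p" using pow_mult_distrib[OF ixy] x y by simp
  also have "\<dots> = \<one>" using x by (simp add: yp nat_pow_inv)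
  finally have "inv x \<otimes> y = \<one>" using TF[OF FI pr] x y by simp
  then have "x \<otimes> (inv x \<otimes> y) = x" using x by simp
  then have "y = x" using x y by (simp add: lcanc1)
  then have "inv a \<otimes> x \<otimes> a = x" by (simp add: y_def cj_def)
  then have "a \<otimes> (inv a \<otimes> x \<otimes> a) = a \<otimes> x" by simp
  then show ?thesis using a x by (simp add: m_assoc lcanc1)
qed

lemma main_loc:
  assumes FI: "frattini_injective G T" and pr: "Factorial_Ring.prime (p::nat)"
    and A: "maximal_abelian_subgroup G T A"
  shows "isolated p G A"
  unfolding isolated_def
proof (intro ballI impI)
  fix x assume x: "x \<in> carrier G" and xpA: "x [^] p \<in> A"
  have Acs: "closed_subgroup G T A" and Aab: "abelian_subset G A"
    and Amax: "\<And>B. closed_subgroup G T B \<Longrightarrow> abelian_subset G B \<Longrightarrow> A \<subseteq> B \<Longrightarrow> B = A"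
    using A by (auto simp: maximal_abelian_subgroup_def)
  have AG: "A \<subseteq> carrier G" using cs_sub[OF Acs] .
  have xa: "x \<otimes> a = a \<otimes> x" if a: "a \<in> A" for a
  proof -
    have ac: "a \<in> carrier G" using a AG by blast
    have "x [^] p \<otimes> a = a \<otimes> x [^] p" using a xpA Aab by (simp add: abelian_subset_def)
    then show ?thesis by (rule comm_root[OF FI pr x ac])
  qed
  define S where "S = insert x A"
  have SG: "S \<subseteq> carrier G" using x AG by (simp add: S_def)
  have SC: "S \<subseteq> Cz s" if s: "s \<in> S" for s
  proof
    fix t assume t: "t \<in> S"
    have "t \<otimes> s = s \<otimes> t"
    proof (cases "t = x")
      case True
      then show ?thesis using s xa by (cases "s = x") (auto simp: S_def)
    next
      case False
      then have tA: "t \<in> A" using t by (simp add: S_def)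
      show ?thesis
      proof (cases "s = x")
        case True then show ?thesis using xa[OF tA] by simp
      next
        case False then have "s \<in> A" using s by (simp add: S_def)
        then show ?thesis using tA Aab by (simp add: abelian_subset_def)
      qed
    qed
    then show "t \<in> Cz s" using t SG by (auto simp: Cz_def)
  qed
  define B where "B = cg S"
  have BC: "B \<subseteq> Cz s" if "s \<in> S" for s
  proof -
    have "s \<in> carrier G" using that SG by blast
    then show ?thesis unfolding B_def using cg_min[OF Cz_cs SC[OF that]] by blast
  qed
  have BG: "B \<subseteq> carrier G" unfolding B_def using cg_cs cs_sub by blast
  have SCb: "S \<subseteq> Cz b" if b: "b \<in> B" for b
  proof
    fix s assume s: "s \<in> S"
    then have "b \<in> Cz s" using BC b by blast
    then show "s \<in> Cz b" using Cz_sym[of s b] s b SG BG by blast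
  qed
  have BCb: "B \<subseteq> Cz b" if b: "b \<in> B" for b
  proof -
    have bc: "b \<in> carrier G" using b BG by blast
    show ?thesis unfolding B_def by (rule cg_min[OF Cz_cs[OF bc]]) (rule SCb[OF b])
  qed
  have "abelian_subset G B" unfolding abelian_subset_def
  proof (intro ballI)
    fix u v assume u: "u \<in> B" and v: "v \<in> B"
    then have "u \<in> Cz v" using BCb by blast
    then show "u \<otimes> v = v \<otimes> u" by (simp add: Cz_def)
  qed
  moreover have "A \<subseteq> B" using cg_sup[OF SG] by (auto simp: B_def S_def)
  ultimately have "B = A" using Amax[OF cg_cs[of S]] by (simp add: B_def)
  moreover have "x \<in> B" using cg_sup[OF SG] by (auto simp: B_def S_def)
  ultimately show "x \<in> A" by simp
qed

end

theorem mainTheorem12: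
  fixes p :: nat and G :: "('a, 'b) monoid_scheme" and T :: "'a topology" and A :: "'a set"
  assumes "pro_p_group p G T"
    and "frattini_injective G T"
    and "maximal_abelian_subgroup G T A"
  shows "isolated p G A"
proof -
  have "tgrp G T" using assms(1)
    by (simp add: pro_p_group_def topological_group_def tgrp_def tgrp_axioms_def)
  then interpret tgrp G T .
  show ?thesis using assms(1) by (intro main_loc assms(2,3)) (simp add: pro_p_group_def)
qed

end
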